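(* Let $X$ be either the unit interval $[0,1]$ or the circle $S^1$ (with its usual metric), let $\mu$ be a finite nonatomic Radon measure on $X$ giving positive measure to every nonempty open set, and let $T:X\to X$ be an invertible continuous measure-preserving map (a homeomorphism preserving $\mu$). Then for any sequence of natural numbers $n_k\to\infty$, $T$ is rigid along $\{n_k\}$ if and only if $T$ is uniformly rigid along $\{n_k\}$.
   Context: $T$ is rigid along $\{n_k\}$ if $\mu(A\triangle T^{n_k}A)\to 0$ for every measurable $A\subset X$. $T$ is uniformly rigid along $\{n_k\}$ if $\sup_{x\in X} d(T^{n_k}x,x)\to 0$. *)

theory Defs
  imports "HOL-Analysis.Analysis"
begin

definition mpt :: "'a measure \<Rightarrow> ('a \<Rightarrow> 'a) \<Rightarrow> bool" where
  "mpt M T \<longleftrightarrow> T \<in> M \<rightarrow>\<^sub>M M \<and>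
     (\<forall>A\<in>sets M. emeasure M (T -` A \<inter> space M) = emeasure M A)"

definition rigid_along :: "'a measure \<Rightarrow> ('a \<Rightarrow> 'a) \<Rightarrow> (nat \<Rightarrow> nat) \<Rightarrow> bool" where
  "rigid_along M T n \<longleftrightarrow>
     (\<forall>A\<in>sets M. (\<lambda>k. emeasure M ((A - (T ^^ n k) ` A) \<union> ((T ^^ n k) ` A - A)))
        \<longlonglongrightarrow> 0)"

definition uniformly_rigid_along :: "'a::metric_space set \<Rightarrow> ('a \<Rightarrow> 'a) \<Rightarrow> (nat \<Rightarrow> nat) \<Rightarrow> bool" where
  "uniformly_rigid_along X T n \<longleftrightarrow>
     (\<lambda>k. SUP x\<in>X. dist ((T ^^ n k) x) x) \<longlonglongrightarrow> 0"

end

theory Submission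
  imports Defs
begin

lemma zero_cross:
  fixes z p q :: complex
  assumes "cmod z = 1" "cmod p = 1" "cmod q = 1" "p \<noteq> q"
    and "Im ((z - p) * cnj (q - p)) = 0"
  shows "z = p \<or> z = q"
proof -
  define v where "v = q - p"
  have v0: "v \<noteq> 0" using assms(4) v_def by auto
  define s where "s = Re ((z - p) * cnj v) / (cmod v)^2"
  have r: "(z - p) * cnj v = of_real (Re ((z - p) * cnj v))"
    using assms(5) v_def by (simp add: complex_eq_iff)
  have vv: "cnj v * v = of_real ((cmod v)^2)"
    by (metis complex_norm_square mult.commute of_real_power)
  have zs: "z - p = of_real s * v"
  proof -
    have "(z - p) * (cnj v * v) = of_real (Re ((z - p) * cnj v)) * v"
      using r by (metis mult.assoc)
    hence "(z - p) * of_real ((cmod v)^2) = of_real (Re ((z - p) * cnj v)) * v"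
      using vv by simp
    thus ?thesis using v0 unfolding s_def
      by (simp add: field_simps)
  qed
  have n2: "\<And>w::complex. (cmod w)^2 = (Re w)^2 + (Im w)^2"
    by (simp add: cmod_def)
  have hz: "(Re p + s * Re v)^2 + (Im p + s * Im v)^2 = 1"
    using assms(1) zs n2[of z] by (simp add: algebra_simps)
  have hq: "(Re p + Re v)^2 + (Im p + Im v)^2 = 1"
    using assms(3) n2[of q] v_def by simp
  have hp: "(Re p)^2 + (Im p)^2 = 1" using assms(2) n2[of p] by simp
  have vpos: "(Re v)^2 + (Im v)^2 > 0" using v0 by (simp add: complex_eq_iff sum_power2_gt_zero_iff)
  have L: "2 * (Re p * Re v + Im p * Im v) = - ((Re v)^2 + (Im v)^2)"
    using hq hp by (simp add: power2_eq_square algebra_simps)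
  have hz2: "s^2 * ((Re v)^2 + (Im v)^2) + s * (2 * (Re p * Re v + Im p * Im v)) = 0"
    using hz hp by (simp add: power2_eq_square algebra_simps)
  have "s * (s - 1) * ((Re v)^2 + (Im v)^2) = 0"
    using hz2 unfolding L by (simp add: power2_eq_square algebra_simps)
  hence "s = 0 \<or> s = 1" using vpos by auto
  thus ?thesis using zs v_def by auto
qed

lemma circ_sep:
  fixes C :: "complex set"
  assumes C: "connected C" "C \<subseteq> sphere 0 1" and pq: "p \<in> sphere 0 1" "q \<in> sphere 0 1" "p \<noteq> q"
    "p \<notin> C" "q \<notin> C" and ab: "a \<in> C" "b \<in> C"
    and ga: "Im ((a - p) * cnj (q - p)) < 0" and gb: "Im ((b - p) * cnj (q - p)) > 0"
  shows False
proof -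
  let ?g = "\<lambda>z. Im ((z - p) * cnj (q - p))"
  have "continuous_on C ?g" by (intro continuous_intros)
  hence cc: "connected (?g ` C)" using C(1) connected_continuous_image by blast
  have "{?g a..?g b} \<subseteq> ?g ` C"
    by (rule connected_contains_Icc[OF cc]) (use ab in auto)
  hence "0 \<in> ?g ` C" using ga gb by auto
  then obtain z where z: "z \<in> C" "?g z = 0" by auto
  have "z = p \<or> z = q"
    by (rule zero_cross) (use z C pq in auto)
  thus False using z pq by auto
qed

lemma circle_vals:
  fixes x y :: complex
  assumes x: "cmod x = 1" and y: "cmod y = 1" and xy: "x \<noteq> y"
  defines "D \<equiv> cmod (y - x)"
  defines "w \<equiv> \<i> * ((y - x) / of_real D)"
  shows "cmod w = 1" "Im ((x - w) * cnj (- w - w)) = - D" "Im ((y - w) * cnj (- w - w)) = D"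
proof -
  have D0: "D > 0" using xy D_def by auto
  have n2: "\<And>w::complex. (cmod w)^2 = (Re w)^2 + (Im w)^2"
    by (simp add: cmod_def)
  have hx: "(Re x)^2 + (Im x)^2 = 1" using x n2[of x] by simp
  have hy: "(Re y)^2 + (Im y)^2 = 1" using y n2[of y] by simp
  have hD: "D^2 = (Re y - Re x)^2 + (Im y - Im x)^2" using n2[of "y-x"] D_def by simp
  show "cmod w = 1" using D0 unfolding w_def D_def by (simp add: norm_mult norm_divide)
  have "Im ((x - w) * cnj (- w - w)) = 2 * (Re x * (Re y - Re x) + Im x * (Im y - Im x)) / D"
    unfolding w_def using D0 by (simp add: field_simps power2_eq_square)
  also have "\<dots> = - D" using hx hy hD D0 by (simp add: field_simps power2_eq_square algebra_simps)
  finally show "Im ((x - w) * cnj (- w - w)) = - D" .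
  have "Im ((y - w) * cnj (- w - w)) = 2 * (Re y * (Re y - Re x) + Im y * (Im y - Im x)) / D"
    unfolding w_def using D0 by (simp add: field_simps power2_eq_square)
  also have "\<dots> = D" using hx hy hD D0 by (simp add: field_simps power2_eq_square algebra_simps)
  finally show "Im ((y - w) * cnj (- w - w)) = D" .
qed

lemma G_bound:
  fixes a x p q w :: complex
  assumes "cmod p = 1" "cmod q = 1" "cmod x = 1" "cmod w = 1"
    and "dist a x < d" "dist p w < d" "dist q (- w) < d"
  shows "\<bar>Im ((a - p) * cnj (q - p)) - Im ((x - w) * cnj (- w - w))\<bar> \<le> 8 * d"
proof -
  have eq: "(a - p) * cnj (q - p) - (x - w) * cnj (- w - w) =
     ((a - x) - (p - w)) * cnj (q - p) + (x - w) * cnj ((q + w) - (p - w))"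
    by (simp add: algebra_simps)
  have d0: "0 \<le> d" using assms(5) by (smt (verit) zero_le_dist)
  have n1: "cmod ((a - x) - (p - w)) \<le> 2 * d"
    using assms(5,6) norm_triangle_ineq4[of "a - x" "p - w"] by (simp add: dist_norm)
  have n2: "cmod (q - p) \<le> 2" using norm_triangle_ineq4[of q p] assms(1,2) by simp
  have n3: "cmod (x - w) \<le> 2" using norm_triangle_ineq4[of x w] assms(3,4) by simp
  have n4: "cmod ((q + w) - (p - w)) \<le> 2 * d"
    using assms(6,7) norm_triangle_ineq4[of "q + w" "p - w"] by (simp add: dist_norm)
  have "\<bar>Im ((a - p) * cnj (q - p)) - Im ((x - w) * cnj (- w - w))\<bar>
      \<le> cmod ((a - p) * cnj (q - p) - (x - w) * cnj (- w - w))"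
    by (metis abs_Im_le_cmod minus_complex.sel(2))
  also have "\<dots> \<le> cmod (((a - x) - (p - w)) * cnj (q - p)) + cmod ((x - w) * cnj ((q + w) - (p - w)))"
    unfolding eq by (rule norm_triangle_ineq)
  also have "\<dots> \<le> 2 * d * 2 + 2 * (2 * d)"
    unfolding norm_mult complex_mod_cnj
    using d0 by (intro add_mono mult_mono n1 n2 n3 n4) auto
  finally show ?thesis by simp
qed

lemma circle_key:
  fixes x y :: complex
  assumes x: "x \<in> sphere 0 1" and y: "y \<in> sphere 0 1" and xy: "x \<noteq> y"
  obtains d P Q where "d > 0" "openin (top_of_set (sphere 0 1)) P" "P \<noteq> {}"
    "openin (top_of_set (sphere 0 1)) Q" "Q \<noteq> {}"
    "\<And>C a b. connected C \<Longrightarrow> C \<subseteq> sphere 0 1 \<Longrightarrow> a \<in> C \<Longrightarrow> b \<in> C \<Longrightarrow>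
        dist a x < d \<Longrightarrow> dist b y < d \<Longrightarrow> P \<subseteq> C \<or> Q \<subseteq> C"
proof -
  define D where "D = cmod (y - x)"
  define w where "w = \<i> * ((y - x) / of_real D)"
  have x1: "cmod x = 1" and y1: "cmod y = 1" using x y by auto
  note vals = circle_vals[OF x1 y1 xy, folded D_def, folded w_def]
  have D0: "D > 0" using xy D_def by auto
  have D2: "D \<le> 2" using norm_triangle_ineq4[of y x] x1 y1 D_def by simp
  define d where "d = D / 16"
  have d0: "d > 0" using D0 d_def by simp
  define P where "P = ball w d \<inter> sphere 0 1"
  define Q where "Q = ball (- w) d \<inter> sphere 0 1"
  show ?thesis
  proof
    show "d > 0" by fact
    show "openin (top_of_set (sphere 0 1)) P" unfolding P_def
      by (metis Int_commute open_ball openin_open_Int)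
    show "openin (top_of_set (sphere 0 1)) Q" unfolding Q_def
      by (metis Int_commute open_ball openin_open_Int)
    show "P \<noteq> {}" proof
      assume "P = {}" moreover have "w \<in> P" unfolding P_def using vals(1) d0 by simp
      ultimately show False by simp
    qed
    show "Q \<noteq> {}" proof
      assume "Q = {}" moreover have "-w \<in> Q" unfolding Q_def using vals(1) d0 by simp
      ultimately show False by simp
    qed
    fix C a b assume C: "connected C" "C \<subseteq> sphere 0 1" "a \<in> C" "b \<in> C"
      and ad: "dist a x < d" and bd: "dist b y < d"
    show "P \<subseteq> C \<or> Q \<subseteq> C"
    proof (rule ccontr)
      assume "\<not> (P \<subseteq> C \<or> Q \<subseteq> C)"
      then obtain p q where p: "p \<in> P" "p \<notin> C" and q: "q \<in> Q" "q \<notin> C" by auto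
      have p1: "cmod p = 1" and q1: "cmod q = 1" using p q P_def Q_def by auto
      have pw: "dist p w < d" and qw: "dist q (- w) < d" using p q P_def Q_def by (auto simp: dist_commute)
      have "p \<noteq> q"
      proof
        assume "p = q"
        hence "dist w (- w) < 2 * d" using pw qw dist_triangle[of w "-w" p]
          by (simp add: dist_commute)
        moreover have "dist w (- w) = 2" using vals(1) by (simp add: dist_norm)
        ultimately show False using D2 d_def by simp
      qed
      have ga: "Im ((a - p) * cnj (q - p)) < 0"
        using G_bound[OF p1 q1 x1 vals(1) ad pw qw] vals(2) d_def D0 unfolding abs_le_iff by linarith
      have gb: "Im ((b - p) * cnj (q - p)) > 0"
        using G_bound[OF p1 q1 y1 vals(1) bd pw qw] vals(3) d_def D0 unfolding abs_le_iff by linarith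
      show False
        by (rule circ_sep[OF C(1,2) _ _ \<open>p \<noteq> q\<close> p(2) q(2) C(3,4) ga gb]) (use p1 q1 in auto)
    qed
  qed
qed

lemma int_key_lt:
  fixes x y :: complex
  defines "I \<equiv> complex_of_real ` {0..1}"
  assumes x: "x \<in> I" and y: "y \<in> I" and xy: "Re x < Re y"
  obtains d P where "d > 0" "openin (top_of_set I) P" "P \<noteq> {}"
    "\<And>C a b. connected C \<Longrightarrow> C \<subseteq> I \<Longrightarrow> a \<in> C \<Longrightarrow> b \<in> C \<Longrightarrow>
        dist a x < d \<Longrightarrow> dist b y < d \<Longrightarrow> P \<subseteq> C"
proof -
  define d where "d = (Re y - Re x) / 3"
  define P where "P = I \<inter> ({z. Re x + d < Re z} \<inter> {z. Re z < Re y - d})"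
  have realI: "\<And>z. z \<in> I \<Longrightarrow> z = of_real (Re z) \<and> 0 \<le> Re z \<and> Re z \<le> 1"
    unfolding I_def by auto
  show ?thesis
  proof
    show "d > 0" using xy d_def by simp
    show "openin (top_of_set I) P" unfolding P_def
      by (intro openin_open_Int open_Int open_halfspace_Re_gt open_halfspace_Re_lt)
    have m1: "(Re x + Re y) / 2 \<in> {0..1}" using realI[OF x] realI[OF y] by auto
    have "complex_of_real ((Re x + Re y) / 2) \<in> I" unfolding I_def using m1 by blast
    moreover have "Re x + d < (Re x + Re y) / 2" "(Re x + Re y) / 2 < Re y - d"
      using xy d_def by auto
    ultimately have "of_real ((Re x + Re y) / 2) \<in> P"
      unfolding P_def by simp
    thus "P \<noteq> {}" by auto
    fix C a b assume C: "connected C" "C \<subseteq> I" "a \<in> C" "b \<in> C"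
      and ad: "dist a x < d" and bd: "dist b y < d"
    have ra: "Re a < Re x + d"
      using ad abs_Re_le_cmod[of "a - x"] by (simp add: dist_norm)
    have rb: "Re y - d < Re b"
      using bd abs_Re_le_cmod[of "b - y"] by (simp add: dist_norm)
    have cc: "connected (Re ` C)"
      by (rule connected_continuous_image[OF _ C(1)]) (intro continuous_intros)
    have sub: "{Re a..Re b} \<subseteq> Re ` C"
      by (rule connected_contains_Icc[OF cc]) (use C in auto)
    show "P \<subseteq> C"
    proof
      fix z assume z: "z \<in> P"
      hence "Re z \<in> {Re a..Re b}" using ra rb unfolding P_def by auto
      then obtain c where c: "c \<in> C" "Re c = Re z" using sub by auto
      have "c \<in> I" "z \<in> I" using c C z P_def by auto
      hence "c = z" using realI c(2) by metis
      thus "z \<in> C" using c by simp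
    qed
  qed
qed

lemma X_key:
  fixes x y :: complex and X :: "complex set"
  assumes X: "X = complex_of_real ` {0..1} \<or> X = sphere 0 1"
    and x: "x \<in> X" and y: "y \<in> X" and xy: "x \<noteq> y"
  obtains d P Q where "d > 0" "openin (top_of_set X) P" "P \<noteq> {}"
    "openin (top_of_set X) Q" "Q \<noteq> {}"
    "\<And>C a b. connected C \<Longrightarrow> C \<subseteq> X \<Longrightarrow> a \<in> C \<Longrightarrow> b \<in> C \<Longrightarrow>
        dist a x < d \<Longrightarrow> dist b y < d \<Longrightarrow> P \<subseteq> C \<or> Q \<subseteq> C"
proof (cases "X = sphere 0 1")
  case True
  show ?thesis using circle_key[of x y] x y xy True that by metis
next
  case False
  hence XI: "X = complex_of_real ` {0..1}" using X by auto
  have "Re x \<noteq> Re y" using x y xy XI by auto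
  hence "Re x < Re y \<or> Re y < Re x" by auto
  thus ?thesis
  proof
    assume "Re x < Re y"
    from int_key_lt[OF x[unfolded XI] y[unfolded XI] this] obtain d P where
      "d > 0" "openin (top_of_set X) P" "P \<noteq> {}"
      "\<And>C a b. connected C \<Longrightarrow> C \<subseteq> X \<Longrightarrow> a \<in> C \<Longrightarrow> b \<in> C \<Longrightarrow>
        dist a x < d \<Longrightarrow> dist b y < d \<Longrightarrow> P \<subseteq> C" unfolding XI by metis
    thus ?thesis using that by metis
  next
    assume "Re y < Re x"
    from int_key_lt[OF y[unfolded XI] x[unfolded XI] this] obtain d P where
      "d > 0" "openin (top_of_set X) P" "P \<noteq> {}"
      "\<And>C a b. connected C \<Longrightarrow> C \<subseteq> X \<Longrightarrow> a \<in> C \<Longrightarrow> b \<in> C \<Longrightarrow>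
        dist a y < d \<Longrightarrow> dist b x < d \<Longrightarrow> P \<subseteq> C" unfolding XI by metis
    thus ?thesis using that by metis
  qed
qed

lemma setup_facts:
  fixes X :: "complex set" and M :: "complex measure" and T :: "complex \<Rightarrow> complex"
  assumes X: "X = complex_of_real ` {0..1} \<or> X = sphere 0 1"
    and sets_M: "sets M = sets (restrict_space borel X)"
    and hom: "homeomorphism X X T S"
  shows "space M = X" "compact X" "X \<noteq> {}" "\<And>z. z \<in> X \<Longrightarrow> norm z \<le> 1"
    "locally connected X"
    "\<And>m. homeomorphism X X (T ^^ m) (S ^^ m)"
    "\<And>U. openin (top_of_set X) U \<Longrightarrow> U \<in> sets M"
    "X \<in> sets borel"
proof -
  show sp: "space M = X" using sets_eq_imp_space_eq[OF sets_M] by (simp add: space_restrict_space)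
  show cX: "compact X" using X
    by (metis compact_Icc compact_continuous_image compact_sphere continuous_on_of_real_id)
  show "X \<noteq> {}"
  proof -
    have "complex_of_real 1 \<in> complex_of_real ` {0..1}" by (rule imageI) simp
    moreover have "(1::complex) \<in> sphere 0 1" by simp
    ultimately show ?thesis using X by (metis empty_iff)
  qed
  show "\<And>z. z \<in> X \<Longrightarrow> norm z \<le> 1" using X by auto
  have "convex (complex_of_real ` {0..1})"
    by (rule convex_linear_image) (auto intro: bounded_linear.linear bounded_linear_of_real)
  thus "locally connected X" using X convex_imp_locally_connected locally_connected_sphere by metis
  show "\<And>m. homeomorphism X X (T ^^ m) (S ^^ m)"
  proof -
    fix m show "homeomorphism X X (T ^^ m) (S ^^ m)"
    proof (induction m)
      case 0 show ?case by (simp add: homeomorphism_ident)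
    next
      case (Suc m)
      have "homeomorphism X X (T \<circ> T ^^ m) (S ^^ m \<circ> S)"
        by (rule homeomorphism_compose[OF Suc hom])
      moreover have "T ^^ Suc m = T \<circ> T ^^ m" by simp
      moreover have "S ^^ Suc m = S ^^ m \<circ> S" by (rule funpow_Suc_right)
      ultimately show ?case by metis
    qed
  qed
  show "\<And>U. openin (top_of_set X) U \<Longrightarrow> U \<in> sets M"
  proof -
    fix U assume "openin (top_of_set X) U"
    then obtain V where "open V" "U = X \<inter> V" by (auto simp: openin_open)
    thus "U \<in> sets M" unfolding sets_M sets_restrict_space by auto
  qed
  show "X \<in> sets borel" using cX by (simp add: compact_imp_closed)
qed

lemma image_meas:
  fixes X :: "complex set" and M :: "complex measure" and T :: "complex \<Rightarrow> complex"
  assumes sets_M: "sets M = sets (restrict_space borel X)"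
    and sp: "space M = X"
    and hom: "homeomorphism X X T S"
    and mp: "mpt M T"
  shows "B \<in> sets M \<Longrightarrow> (T ^^ m) ` B \<in> sets M \<and> emeasure M ((T ^^ m) ` B) = emeasure M B"
proof (induction m arbitrary: B)
  case 0 thus ?case by simp
next
  case (Suc m)
  have one: "T ` C \<in> sets M \<and> emeasure M (T ` C) = emeasure M C" if C: "C \<in> sets M" for C
  proof -
    have CX: "C \<subseteq> X" using sets.sets_into_space[OF C] sp by simp
    have Smeas: "S \<in> M \<rightarrow>\<^sub>M M"
    proof -
      have "continuous_on X S" using hom by (simp add: homeomorphism_def)
      hence "S \<in> borel_measurable (restrict_space borel X)"
        by (rule borel_measurable_continuous_on_restrict)
      hence "S \<in> restrict_space borel X \<rightarrow>\<^sub>M restrict_space borel X"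
        by (rule measurable_restrict_space2[rotated]) (use hom in \<open>auto simp: homeomorphism_def space_restrict_space\<close>)
      thus ?thesis using measurable_cong_sets[OF sets_M sets_M] by blast
    qed
    have h1: "\<And>x. x \<in> X \<Longrightarrow> S (T x) = x" "\<And>y. y \<in> X \<Longrightarrow> T (S y) = y"
      "\<And>x. x \<in> X \<Longrightarrow> T x \<in> X" "\<And>y. y \<in> X \<Longrightarrow> S y \<in> X"
      using hom unfolding homeomorphism_def by auto
    have eq: "T ` C = S -` C \<inter> space M"
    proof (intro equalityI subsetI)
      fix z assume "z \<in> T ` C"
      then obtain c where "c \<in> C" "z = T c" by blast
      thus "z \<in> S -` C \<inter> space M" using h1 CX sp by auto
    next
      fix z assume z: "z \<in> S -` C \<inter> space M"
      hence "z = T (S z)" using h1 sp by auto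
      thus "z \<in> T ` C" using z by blast
    qed
    have m1: "T ` C \<in> sets M" unfolding eq using Smeas C by (rule measurable_sets)
    have eq2: "T -` (T ` C) \<inter> space M = C"
    proof (intro equalityI subsetI)
      fix z assume z: "z \<in> T -` (T ` C) \<inter> space M"
      then obtain c where c: "c \<in> C" "T z = T c" by auto
      have "z = S (T z)" using z h1 sp by auto
      also have "\<dots> = c" using c h1 CX by auto
      finally show "z \<in> C" using c by simp
    next
      fix z assume "z \<in> C" thus "z \<in> T -` (T ` C) \<inter> space M" using CX sp by auto
    qed
    have "emeasure M (T -` (T ` C) \<inter> space M) = emeasure M (T ` C)"
      using mp m1 sp unfolding mpt_def by auto
    thus ?thesis using m1 eq2 by simp
  qed
  have "(T ^^ Suc m) ` B = T ` ((T ^^ m) ` B)" by (simp add: image_comp)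
  thus ?case using one Suc by metis
qed

lemma uniform_imp_rigid:
  fixes X :: "complex set" and M :: "complex measure" and T :: "complex \<Rightarrow> complex"
    and n :: "nat \<Rightarrow> nat"
  assumes sets_M: "sets M = sets (restrict_space borel X)"
    and sp: "space M = X"
    and finite: "emeasure M X < \<infinity>"
    and hom: "homeomorphism X X T S"
    and homk: "\<And>m. homeomorphism X X (T ^^ m) (S ^^ m)"
    and mp: "mpt M T"
    and Xb: "\<And>z. z \<in> X \<Longrightarrow> norm z \<le> 1"
    and Xborel: "X \<in> sets borel"
    and UR: "uniformly_rigid_along X T n"
  shows "rigid_along M T n"
  unfolding rigid_along_def
proof
  interpret finite_measure M by (rule finite_measureI) (use finite sp in auto)
  fix A assume A: "A \<in> sets M"
  have AX: "A \<subseteq> X" using sets.sets_into_space[OF A] sp by simp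
  have Ab: "A \<in> sets borel" using A Xborel unfolding sets_M sets_restrict_space by auto
  define N where "N = distr M borel (\<lambda>z. z)"
  have idm: "(\<lambda>z. z) \<in> M \<rightarrow>\<^sub>M borel"
    using measurable_restrict_space1[OF measurable_id[of borel], of X] measurable_cong_sets[OF sets_M refl]
    by blast
  have sN: "sets N = sets borel" unfolding N_def by simp
  have spN: "space N = UNIV" unfolding N_def by simp
  have eN: "emeasure N B = emeasure M (B \<inter> X)" if "B \<in> sets borel" for B
    unfolding N_def using emeasure_distr[OF idm, of B] that sp by simp
  have finN: "emeasure N (space N) \<noteq> \<infinity>" using eN[of UNIV] spN finite by simp
  have eNA: "emeasure N A = ennreal (measure M A)" using eN[OF Ab] AX emeasure_eq_measure
    by (simp add: Int_absorb2)
  show "(\<lambda>k. emeasure M ((A - (T ^^ n k) ` A) \<union> ((T ^^ n k) ` A - A))) \<longlonglongrightarrow> 0"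
    unfolding order_tendsto_iff
  proof (intro conjI allI impI)
    fix l :: ennreal assume "l < 0" thus "eventually (\<lambda>k. l < emeasure M ((A - (T ^^ n k) ` A) \<union> ((T ^^ n k) ` A - A))) sequentially"
      by simp
  next
    fix u :: ennreal assume u: "0 < u"
    obtain r where r: "r > 0" "ennreal r < u"
    proof (cases "u = top")
      case True thus ?thesis using that[of 1] by simp
    next
      case False
      then obtain q where q: "u = ennreal q" "q \<ge> 0" by (cases u) auto
      hence "q > 0" using u by auto
      thus ?thesis using that[of "q/2"] q by (simp add: ennreal_less_iff)
    qed
    define e where "e = r / 4"
    have e0: "e > 0" using r e_def by simp
    obtain K where K: "compact K" "K \<subseteq> A" "measure M A \<le> measure M K + e"
    proof (cases "measure M A \<le> e")
      case True thus ?thesis using that[of "{}"] by simp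
    next
      case False
      have "ennreal (measure M A - e) < emeasure N A"
        unfolding eNA using False e0 by (simp add: ennreal_less_iff)
      also have "emeasure N A = (SUP K \<in> {K. K \<subseteq> A \<and> compact K}. emeasure N K)"
        by (rule inner_regular[OF sN finN Ab])
      finally obtain K where K: "K \<subseteq> A" "compact K" "ennreal (measure M A - e) < emeasure N K"
        unfolding less_SUP_iff by auto
      have "emeasure N K = ennreal (measure M K)"
        using eN[of K] K(1,2) AX compact_imp_closed emeasure_eq_measure
        by (metis borel_closed inf.absorb_iff1 subset_trans)
      hence "measure M A - e < measure M K" using K(3) False by (simp add: ennreal_less_iff)
      thus ?thesis using that[of K] K by simp
    qed
    obtain U where U: "open U" "A \<subseteq> U" "measure M (U \<inter> X) \<le> measure M A + e"
    proof -
      have "emeasure N A < ennreal (measure M A + e)"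
        unfolding eNA using e0 by (simp add: ennreal_less_iff)
      also have "emeasure N A = (INF U \<in> {U. A \<subseteq> U \<and> open U}. emeasure N U)"
        by (rule outer_regular[OF sN finN Ab])
      finally obtain U where U: "A \<subseteq> U" "open U" "emeasure N U < ennreal (measure M A + e)"
        unfolding INF_less_iff by auto
      have "emeasure N U = ennreal (measure M (U \<inter> X))"
        using eN[of U] U(2) emeasure_eq_measure by simp
      hence "measure M (U \<inter> X) < measure M A + e" using U(3) by (simp add: ennreal_less_iff)
      thus ?thesis using that[of U] U by simp
    qed
    define G where "G = U \<inter> X"
    have G: "G \<in> sets M" unfolding G_def sets_M sets_restrict_space using U(1) by auto
    have AG: "A \<subseteq> G" using U AX G_def by auto
    have Kb: "K \<in> sets M" unfolding sets_M sets_restrict_space using K AX compact_imp_closed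
      by (auto intro!: image_eqI[of K _ K] borel_closed compact_imp_closed)
    have mAK: "measure M (A - K) \<le> e" using finite_measure_Diff[OF A Kb K(2)] K(3) by simp
    have mGA: "measure M (G - A) \<le> e" using finite_measure_Diff[OF G A AG] U(3) G_def by simp
    have "K \<subseteq> \<Union>{U}" using K(2) U(2) by auto
    then obtain d where d: "d > 0" "\<And>z. z \<in> K \<Longrightarrow> ball z d \<subseteq> U"
      using Heine_Borel_lemma[OF K(1), of "{U}"] U(1) by auto
    have ev: "eventually (\<lambda>k. (SUP x\<in>X. dist ((T ^^ n k) x) x) < d) sequentially"
      using order_tendstoD(2)[OF UR[unfolded uniformly_rigid_along_def] d(1)] .
    show "eventually (\<lambda>k. emeasure M ((A - (T ^^ n k) ` A) \<union> ((T ^^ n k) ` A - A)) < u) sequentially"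
    proof (rule eventually_mono[OF ev])
      fix k assume sup: "(SUP x\<in>X. dist ((T ^^ n k) x) x) < d"
      define F where "F = T ^^ n k"
      define R where "R = S ^^ n k"
      have hk: "homeomorphism X X F R" unfolding F_def R_def by (rule homk)
      have FX: "\<And>z. z \<in> X \<Longrightarrow> F z \<in> X" and RX: "\<And>z. z \<in> X \<Longrightarrow> R z \<in> X"
        and FR: "\<And>z. z \<in> X \<Longrightarrow> F (R z) = z" and RF: "\<And>z. z \<in> X \<Longrightarrow> R (F z) = z"
        using hk unfolding homeomorphism_def by auto
      have bdd: "bdd_above ((\<lambda>x. dist (F x) x) ` X)"
      proof (rule bdd_aboveI2)
        fix x assume "x \<in> X"
        thus "dist (F x) x \<le> 2" using Xb[of x] Xb[OF FX[of x]] norm_triangle_ineq4[of "F x" x]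
          by (simp add: dist_norm)
      qed
      have close: "dist (F z) z < d" if "z \<in> X" for z
        using cSUP_upper[OF that bdd] sup F_def by simp
      have FK: "F ` K \<subseteq> G"
      proof
        fix y assume "y \<in> F ` K" then obtain z where z: "z \<in> K" "y = F z" by auto
        have zX: "z \<in> X" using z K(2) AX by auto
        have "y \<in> ball z d" using close[OF zX] z by (simp add: dist_commute)
        thus "y \<in> G" using d(2)[OF z(1)] FX[OF zX] z G_def by auto
      qed
      have RK: "R ` K \<subseteq> G"
      proof
        fix y assume "y \<in> R ` K" then obtain z where z: "z \<in> K" "y = R z" by auto
        have zX: "z \<in> X" using z K(2) AX by auto
        have "dist (F (R z)) (R z) < d" using close[OF RX[OF zX]] .
        hence "y \<in> ball z d" using FR[OF zX] z by simp
        thus "y \<in> G" using d(2)[OF z(1)] RX[OF zX] z G_def by auto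
      qed
      have AKs: "A - K \<in> sets M" using A Kb by auto
      have GAs: "G - A \<in> sets M" using A G by auto
      note im1 = image_meas[OF sets_M sp hom mp AKs, of "n k", folded F_def]
      note im2 = image_meas[OF sets_M sp hom mp GAs, of "n k", folded F_def]
      have mi1: "measure M (F ` (A - K)) = measure M (A - K)" using im1 by (simp add: measure_def)
      have mi2: "measure M (F ` (G - A)) = measure M (G - A)" using im2 by (simp add: measure_def)
      have sub: "(A - F ` A) \<union> (F ` A - A) \<subseteq> ((F ` (A - K) \<union> (G - A)) \<union> ((A - K) \<union> F ` (G - A)))"
      proof
        fix y assume y: "y \<in> (A - F ` A) \<union> (F ` A - A)"
        show "y \<in> ((F ` (A - K) \<union> (G - A)) \<union> ((A - K) \<union> F ` (G - A)))"
        proof (cases "y \<in> F ` A - A")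
          case True
          then obtain a where a: "a \<in> A" "y = F a" "y \<notin> A" by auto
          show ?thesis
          proof (cases "a \<in> K")
            case True thus ?thesis using FK a by auto
          next
            case False thus ?thesis using a by auto
          qed
        next
          case False
          hence y2: "y \<in> A" "y \<notin> F ` A" using y by auto
          show ?thesis
          proof (cases "y \<in> K")
            case False thus ?thesis using y2 by auto
          next
            case True
            have yX: "y \<in> X" using y2 AX by auto
            have "R y \<in> G" using RK True by auto
            moreover have "R y \<notin> A" using y2 FR[OF yX] by (metis image_eqI)
            moreover have "y = F (R y)" using FR[OF yX] by simp
            ultimately show ?thesis by blast
          qed
        qed
      qed
      have "measure M ((A - F ` A) \<union> (F ` A - A))
          \<le> measure M ((F ` (A - K) \<union> (G - A)) \<union> ((A - K) \<union> F ` (G - A)))"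
        by (rule finite_measure_mono[OF sub]) (use im1 im2 AKs GAs in auto)
      also have "\<dots> \<le> measure M (F ` (A - K) \<union> (G - A)) + measure M ((A - K) \<union> F ` (G - A))"
        by (rule measure_Un_le) (use im1 im2 AKs GAs in auto)
      also have "\<dots> \<le> (measure M (F ` (A - K)) + measure M (G - A)) + (measure M (A - K) + measure M (F ` (G - A)))"
        by (intro add_mono measure_Un_le) (use im1 im2 AKs GAs in auto)
      also have "\<dots> \<le> r" unfolding mi1 mi2 using mAK mGA e_def by simp
      finally have "measure M ((A - F ` A) \<union> (F ` A - A)) \<le> r" .
      hence "emeasure M ((A - F ` A) \<union> (F ` A - A)) \<le> ennreal r"
        by (simp add: emeasure_eq_measure ennreal_leI)
      thus "emeasure M ((A - (T ^^ n k) ` A) \<union> ((T ^^ n k) ` A - A)) < u"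
        using r(2) F_def by simp
    qed
  qed
qed
lemma X_key2:
  fixes x y :: complex and X :: "complex set"
  assumes X: "X = complex_of_real ` {0..1} \<or> X = sphere 0 1"
    and x: "x \<in> X" and y: "y \<in> X" and xy: "x \<noteq> y"
  shows "\<exists>d P Q. d > 0 \<and> openin (top_of_set X) P \<and> P \<noteq> {} \<and>
      openin (top_of_set X) Q \<and> Q \<noteq> {} \<and>
      (\<forall>C a b. connected C \<and> C \<subseteq> X \<and> a \<in> C \<and> b \<in> C \<and>
        dist a x < d \<and> dist b y < d \<longrightarrow> P \<subseteq> C \<or> Q \<subseteq> C)"
proof (rule X_key[OF X x y xy])
  fix d P Q assume H: "d > 0" "openin (top_of_set X) P" "P \<noteq> {}"
    "openin (top_of_set X) Q" "Q \<noteq> {}"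
    "\<And>C a b. connected C \<Longrightarrow> C \<subseteq> X \<Longrightarrow> a \<in> C \<Longrightarrow> b \<in> C \<Longrightarrow>
        dist a x < d \<Longrightarrow> dist b y < d \<Longrightarrow> P \<subseteq> C \<or> Q \<subseteq> C"
  have K: "\<forall>C a b. connected C \<and> C \<subseteq> X \<and> a \<in> C \<and> b \<in> C \<and>
        dist a x < d \<and> dist b y < d \<longrightarrow> P \<subseteq> C \<or> Q \<subseteq> C"
  proof (intro allI impI)
    fix C a b assume A: "connected C \<and> C \<subseteq> X \<and> a \<in> C \<and> b \<in> C \<and> dist a x < d \<and> dist b y < d"
    show "P \<subseteq> C \<or> Q \<subseteq> C"
      using H(6)[of C a b] A by simp
  qed
  show ?thesis using H(1-5) K by (intro exI[of _ d] exI[of _ P] exI[of _ Q]) simp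
qed

lemma rigid_imp_uniform:
  fixes X :: "complex set" and M :: "complex measure" and T :: "complex \<Rightarrow> complex"
    and n :: "nat \<Rightarrow> nat"
  assumes X: "X = complex_of_real ` {0..1} \<or> X = sphere 0 1"
    and sets_M: "sets M = sets (restrict_space borel X)"
    and sp: "space M = X"
    and finite: "emeasure M X < \<infinity>"
    and nonatomic: "\<forall>x\<in>X. emeasure M {x} = 0"
    and full_support: "\<forall>U. openin (top_of_set X) U \<and> U \<noteq> {} \<longrightarrow> emeasure M U > 0"
    and homk: "\<And>m. homeomorphism X X (T ^^ m) (S ^^ m)"
    and cX: "compact X" and Xne: "X \<noteq> {}" and Xb: "\<And>z. z \<in> X \<Longrightarrow> norm z \<le> 1"
    and lcX: "locally connected X"
    and om: "\<And>U. openin (top_of_set X) U \<Longrightarrow> U \<in> sets M"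
    and RR: "rigid_along M T n"
  shows "uniformly_rigid_along X T n"
proof -
  have FX: "\<And>m z. z \<in> X \<Longrightarrow> (T ^^ m) z \<in> X"
    using homk unfolding homeomorphism_def by blast
  have bdd: "bdd_above ((\<lambda>x. dist ((T ^^ m) x) x) ` X)" for m
  proof (rule bdd_aboveI2)
    fix x assume "x \<in> X"
    thus "dist ((T ^^ m) x) x \<le> 2" using Xb[of x] Xb[OF FX[of x m]] norm_triangle_ineq4[of "(T ^^ m) x" x]
      by (simp add: dist_norm)
  qed
  have E: "eventually (\<lambda>k. \<forall>x\<in>X. dist ((T ^^ n k) x) x \<le> \<epsilon>) sequentially" if eps: "\<epsilon> > 0" for \<epsilon>
  proof (rule ccontr)
    assume ne: "\<not> eventually (\<lambda>k. \<forall>x\<in>X. dist ((T ^^ n k) x) x \<le> \<epsilon>) sequentially"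
    define Sset where "Sset = {k. \<exists>x\<in>X. \<epsilon> < dist ((T ^^ n k) x) x}"
    have "\<forall>N. \<exists>k\<ge>N. k \<in> Sset" using ne unfolding eventually_sequentially Sset_def
      by (auto simp: not_le)
    hence "infinite Sset" by (simp add: infinite_nat_iff_unbounded_le)
    then obtain r :: "nat \<Rightarrow> nat" where r: "strict_mono r" "\<And>j. r j \<in> Sset" using infinite_enumerate by blast
    have "\<forall>j. \<exists>x. x \<in> X \<and> \<epsilon> < dist ((T ^^ n (r j)) x) x" using r(2) Sset_def by blast
    from choice[OF this] obtain xs where xs0: "\<forall>j. xs j \<in> X \<and> \<epsilon> < dist ((T ^^ n (r j)) (xs j)) (xs j)"
      by blast
    hence xs: "\<And>j. xs j \<in> X" "\<And>j. \<epsilon> < dist ((T ^^ n (r j)) (xs j)) (xs j)" by auto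
    define \<sigma> where "\<sigma> j = (xs j, (T ^^ n (r j)) (xs j))" for j
    have \<sigma>X: "\<sigma> j \<in> X \<times> X" for j using xs FX \<sigma>_def by auto
    have "seq_compact (X \<times> X)" by (intro compact_imp_seq_compact compact_Times cX)
    moreover have "\<forall>j. \<sigma> j \<in> X \<times> X" using \<sigma>X by blast
    ultimately obtain l f where l: "l \<in> X \<times> X" "strict_mono f" "(\<sigma> \<circ> f) \<longlonglongrightarrow> l"
      by (rule seq_compactE)
    obtain x y where xy: "l = (x, y)" by (cases l)
    have xX: "x \<in> X" and yX: "y \<in> X" using l(1) xy by auto
    define s where "s = r \<circ> f"
    have s: "strict_mono s" unfolding s_def using strict_mono_o[OF r(1) l(2)] .
    have xf: "(\<lambda>j. xs (f j)) \<longlonglongrightarrow> x" using tendsto_fst[OF l(3)] xy \<sigma>_def by (simp add: o_def)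
    have yf: "(\<lambda>j. (T ^^ n (s j)) (xs (f j))) \<longlonglongrightarrow> y"
      using tendsto_snd[OF l(3)] xy \<sigma>_def s_def by (simp add: o_def)
    have "\<epsilon> \<le> dist y x"
      by (rule tendsto_lowerbound[OF tendsto_dist[OF yf xf]])
         (use xs(2) s_def in \<open>auto intro!: always_eventually less_imp_le\<close>)
    hence xney: "x \<noteq> y" using eps by auto
    have "\<exists>d P Q. d > 0 \<and> openin (top_of_set X) P \<and> P \<noteq> {} \<and>
      openin (top_of_set X) Q \<and> Q \<noteq> {} \<and>
      (\<forall>C a b. connected C \<and> C \<subseteq> X \<and> a \<in> C \<and> b \<in> C \<and>
        dist a x < d \<and> dist b y < d \<longrightarrow> P \<subseteq> C \<or> Q \<subseteq> C)"
      by (rule X_key2[OF X xX yX xney])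
    then obtain d P Q where dPQ: "d > 0 \<and> openin (top_of_set X) P \<and> P \<noteq> {} \<and>
      openin (top_of_set X) Q \<and> Q \<noteq> {} \<and>
      (\<forall>C a b. connected C \<and> C \<subseteq> X \<and> a \<in> C \<and> b \<in> C \<and>
        dist a x < d \<and> dist b y < d \<longrightarrow> P \<subseteq> C \<or> Q \<subseteq> C)"
      by (elim exE)
    hence d: "d > 0" "openin (top_of_set X) P" "P \<noteq> {}"
      "openin (top_of_set X) Q" "Q \<noteq> {}"
      and key: "\<forall>C a b. connected C \<and> C \<subseteq> X \<and> a \<in> C \<and> b \<in> C \<and>
        dist a x < d \<and> dist b y < d \<longrightarrow> P \<subseteq> C \<or> Q \<subseteq> C"
      by simp_all
    define c where "c = min (emeasure M P) (emeasure M Q)"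
    have c0: "c > 0" using full_support d c_def by auto
    define B where "B m = X \<inter> ball x (1 / real (Suc m))" for m
    have Bm: "B m \<in> sets M" for m unfolding B_def by (rule om) (metis open_ball openin_open_Int)
    have Bdec: "decseq B" unfolding B_def decseq_def
    proof (intro allI impI subsetI)
      fix m p z assume "m \<le> p" "z \<in> X \<inter> ball x (1 / real (Suc p))"
      moreover have "1 / real (Suc p) \<le> 1 / real (Suc m)" using \<open>m \<le> p\<close> by (simp add: frac_le)
      ultimately show "z \<in> X \<inter> ball x (1 / real (Suc m))" by auto
    qed
    have Bfin: "emeasure M (B m) \<noteq> \<infinity>" for m
    proof -
      have "emeasure M (B m) \<le> emeasure M X"
        by (rule emeasure_mono) (use B_def sets.top[of M] sp in auto)
      thus ?thesis using finite by (auto simp: top_unique)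
    qed
    have Bint: "(\<Inter>m. B m) \<subseteq> {x}"
    proof
      fix z assume z: "z \<in> (\<Inter>m. B m)"
      show "z \<in> {x}"
      proof (rule ccontr)
        assume "z \<notin> {x}"
        hence "dist x z > 0" by simp
        then obtain m where "inverse (real (Suc m)) < dist x z" using reals_Archimedean by blast
        moreover have "z \<in> B m" using z by blast
        ultimately show False unfolding B_def by (simp add: field_simps)
      qed
    qed
    have "emeasure M (\<Inter>m. B m) \<le> emeasure M {x}"
      by (rule emeasure_mono[OF Bint]) (unfold sets_M sets_restrict_space, use xX in \<open>auto intro!: image_eqI[of "{x}" _ "{x}"] borel_closed\<close>)
    hence B0: "emeasure M (\<Inter>m. B m) = 0" using nonatomic xX by simp
    have "(\<lambda>m. emeasure M (B m)) \<longlonglongrightarrow> 0"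
      using Lim_emeasure_decseq[of B M] Bm Bdec Bfin B0 by auto
    from order_tendstoD(2)[OF this c0] obtain m where mB: "emeasure M (B m) < c"
      by (auto simp: eventually_sequentially)
    define \<rho> where "\<rho> = min (1 / real (Suc m)) d"
    have \<rho>0: "\<rho> > 0" using d(1) \<rho>_def by simp
    have "openin (top_of_set X) (X \<inter> ball x \<rho>)" by (metis open_ball openin_open_Int)
    moreover have "x \<in> X \<inter> ball x \<rho>" using xX \<rho>0 by simp
    ultimately obtain V where V: "openin (top_of_set X) V" "connected V" "x \<in> V" "V \<subseteq> X \<inter> ball x \<rho>"
      using lcX unfolding locally_connected by blast
    have VX: "V \<subseteq> X" using V(4) by auto
    have Vs: "V \<in> sets M" using om V(1) .
    have VB: "emeasure M V < c"
    proof -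
      have "emeasure M V \<le> emeasure M (B m)"
        by (rule emeasure_mono[OF _ Bm]) (use V(4) \<rho>_def B_def in auto)
      thus ?thesis using mB by simp
    qed
    have V0: "emeasure M V > 0" using full_support V by auto
    define h where "h k = emeasure M ((V - (T ^^ n k) ` V) \<union> ((T ^^ n k) ` V - V))" for k
    have "h \<longlonglongrightarrow> 0" using RR Vs unfolding rigid_along_def h_def by blast
    hence hs: "(\<lambda>j. h (s j)) \<longlonglongrightarrow> 0" using LIMSEQ_subseq_LIMSEQ[OF _ s] by (simp add: o_def)
    obtain Ov where O: "open Ov" "V = X \<inter> Ov" using V(1) by (auto simp: openin_open)
    have e1: "eventually (\<lambda>j. xs (f j) \<in> V) sequentially"
      using topological_tendstoD[OF xf O(1)] O V(3) xs(1) by (auto elim: eventually_mono)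
    have e2: "eventually (\<lambda>j. dist ((T ^^ n (s j)) (xs (f j))) y < d) sequentially"
      using yf d(1) unfolding tendsto_iff by blast
    have e3: "eventually (\<lambda>j. h (s j) < emeasure M V) sequentially"
      using order_tendstoD(2)[OF hs V0] .
    have "(\<lambda>j. emeasure M V + h (s j)) \<longlonglongrightarrow> emeasure M V + 0"
      by (intro tendsto_add tendsto_const hs)
    hence e4: "eventually (\<lambda>j. emeasure M V + h (s j) < c) sequentially"
      using order_tendstoD(2) VB by simp
    from eventually_conj[OF e1 eventually_conj[OF e2 eventually_conj[OF e3 e4]]]
    obtain j where j: "xs (f j) \<in> V" "dist ((T ^^ n (s j)) (xs (f j))) y < d"
      "h (s j) < emeasure M V" "emeasure M V + h (s j) < c"
      unfolding eventually_sequentially by blast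
    define F where "F = T ^^ n (s j)"
    define J where "J = F ` V"
    have hF: "homeomorphism X X F (S ^^ n (s j))" unfolding F_def by (rule homk)
    have JX: "J \<subseteq> X" using FX VX J_def F_def by auto
    have Jc: "connected J" unfolding J_def
      by (rule connected_continuous_image[OF continuous_on_subset[OF _ VX] V(2)])
         (use hF in \<open>simp add: homeomorphism_def\<close>)
    have Js: "J \<in> sets M" unfolding J_def by (rule om, rule homeomorphism_imp_open_map[OF hF V(1)])
    have Ds: "(V - J) \<union> (J - V) \<in> sets M" using Js Vs by auto
    have hj: "h (s j) = emeasure M ((V - J) \<union> (J - V))" unfolding h_def J_def F_def by simp
    have "V \<inter> J \<noteq> {}"
    proof
      assume "V \<inter> J = {}"
      hence "V \<subseteq> (V - J) \<union> (J - V)" by auto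
      hence "emeasure M V \<le> h (s j)" unfolding hj by (rule emeasure_mono[OF _ Ds])
      thus False using j(3) by simp
    qed
    then obtain a where a: "a \<in> V" "a \<in> J" by blast
    have ad: "dist a x < d" using a V(4) \<rho>_def by (auto simp: dist_commute)
    have bJ: "F (xs (f j)) \<in> J" using j(1) J_def by simp
    have "P \<subseteq> J \<or> Q \<subseteq> J"
      using key Jc JX a(2) bJ ad j(2) unfolding F_def by blast
    hence cJ: "c \<le> emeasure M J"
      using emeasure_mono[of P J M] emeasure_mono[of Q J M] Js c_def by (auto intro: min.coboundedI1 min.coboundedI2 order_trans)
    have "emeasure M J \<le> emeasure M (V \<union> (J - V))" by (rule emeasure_mono) (use Vs Js in auto)
    also have "\<dots> \<le> emeasure M V + emeasure M (J - V)" by (rule emeasure_subadditive) (use Vs Js in auto)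
    also have "emeasure M (J - V) \<le> h (s j)" unfolding hj by (rule emeasure_mono[OF _ Ds]) auto
    hence "emeasure M V + emeasure M (J - V) \<le> emeasure M V + h (s j)" by (rule add_left_mono)
    finally have "emeasure M J < c" using j(4) by simp
    thus False using cJ by simp
  qed
  show ?thesis unfolding uniformly_rigid_along_def tendsto_iff
  proof (intro allI impI)
    fix e :: real assume e: "e > 0"
    show "eventually (\<lambda>k. dist (SUP x\<in>X. dist ((T ^^ n k) x) x) 0 < e) sequentially"
    proof (rule eventually_mono[OF E[of "e/2"]])
      show "e / 2 > 0" using e by simp
      fix k assume k: "\<forall>x\<in>X. dist ((T ^^ n k) x) x \<le> e / 2"
      obtain x0 where x0: "x0 \<in> X" using Xne by auto
      have lo: "0 \<le> (SUP x\<in>X. dist ((T ^^ n k) x) x)"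
        using cSUP_upper[OF x0 bdd[of "n k"]] zero_le_dist[of "(T ^^ n k) x0" x0] by linarith
      have up: "(SUP x\<in>X. dist ((T ^^ n k) x) x) \<le> e / 2"
        by (rule cSUP_least[OF Xne]) (use k in auto)
      show "dist (SUP x\<in>X. dist ((T ^^ n k) x) x) 0 < e" using lo up e by simp
    qed
  qed
qed

theorem lemma3p1:
  fixes X :: "complex set" and M :: "complex measure" and T :: "complex \<Rightarrow> complex"
    and n :: "nat \<Rightarrow> nat"
  assumes X: "X = complex_of_real ` {0..1} \<or> X = sphere 0 1"
    and sets_M: "sets M = sets (restrict_space borel X)"
    and finite: "emeasure M X < \<infinity>"
    and nonatomic: "\<forall>x\<in>X. emeasure M {x} = 0"
    and full_support: "\<forall>U. openin (top_of_set X) U \<and> U \<noteq> {} \<longrightarrow> emeasure M U > 0"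
    and homeo: "\<exists>S. homeomorphism X X T S"
    and mp: "mpt M T"
    and n: "filterlim n at_top sequentially"
  shows "rigid_along M T n \<longleftrightarrow> uniformly_rigid_along X T n"
proof -
  obtain S where hom: "homeomorphism X X T S" using homeo by blast
  note sf = setup_facts[OF X sets_M hom]
  show ?thesis
  proof
    assume R: "rigid_along M T n"
    show "uniformly_rigid_along X T n"
      by (rule rigid_imp_uniform[OF X sets_M sf(1) finite nonatomic full_support sf(6) sf(2) sf(3) sf(4) sf(5) sf(7) R])
  next
    assume U: "uniformly_rigid_along X T n"
    show "rigid_along M T n"
      by (rule uniform_imp_rigid[OF sets_M sf(1) finite hom sf(6) mp sf(4) sf(8) U])
  qed
qed

end
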